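(* Let $T:[0,1]\to[0,1]$ be a piecewise smooth map and $\rho_1$ a noise kernel as in the context, with transfer operator $L_{T,\rho_1}=N_{\rho_1}L_T$, and suppose there is $i$ with $\|L_{T,\rho_1}^i|_V\|_{L^1\to L^1}<1$. Then there is a constant $C>0$ such that if the noise kernel $\rho_1$ is replaced by another bounded-variation noise kernel $\rho_2$, $$\|f_2-f_1\|_{L^1}\le C\,\|\rho_1-\rho_2\|_{L^1},$$ where $f_1$ is the stationary measure of $N_{\rho_1}L_T$ and $f_2$ is a stationary measure of $N_{\rho_2}L_T$.
   Context: $T$ is piecewise smooth: there is a finite partition of $[0,1]$ into intervals $P_i$ such that on each $P_i$, $T$ is monotonic and $C^2$ in the interior, and the limits of $T'$ at the endpoints exist in $\mathbb R\cup\{\pm\infty\}$. Noise kernels are functions of bounded variation with integral $1$ and bounded support. $L_T$ is the pushforward by $T$. With $\pi(x)=\min_{i\in\mathbb Z}|x-2i|$, $N_\rho f=\pi_*(\rho*\hat f)$, $\hat f$ being $f$ extended by $0$ outside $[0,1]$ and $\pi_*$ the pushforward by $\pi$. $V=\{\nu\in L^1([0,1]):\int\nu=0\}$. A stationary measure is a probability density fixed by the operator. *)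

theory Defs
  imports "HOL-Analysis.Analysis"
begin

definition C2_on :: "real set \<Rightarrow> (real \<Rightarrow> real) \<Rightarrow> bool" where
  "C2_on S T \<longleftrightarrow> (\<exists>T1 T2. (\<forall>x\<in>S. (T has_real_derivative T1 x) (at x)
        \<and> (T1 has_real_derivative T2 x) (at x)) \<and> continuous_on S T2)"

definition piecewise_smooth :: "(real \<Rightarrow> real) \<Rightarrow> bool" where
  "piecewise_smooth T \<longleftrightarrow> (\<forall>x\<in>{0..1}. T x \<in> {0..1}) \<and>
     (\<exists>(n::nat) (a::nat \<Rightarrow> real). a 0 = 0 \<and> a n = 1 \<and> (\<forall>k<n. a k < a (Suc k)) \<and>
        (\<forall>k<n. (mono_on {a k<..<a (Suc k)} T \<or> mono_on {a k<..<a (Suc k)} (\<lambda>x. - T x))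
              \<and> C2_on {a k<..<a (Suc k)} T
              \<and> (\<exists>l::ereal. ((\<lambda>x. ereal (deriv T x)) \<longlongrightarrow> l) (at_right (a k)))
              \<and> (\<exists>l::ereal. ((\<lambda>x. ereal (deriv T x)) \<longlongrightarrow> l) (at_left (a (Suc k))))))"

definition bounded_variation :: "(real \<Rightarrow> real) \<Rightarrow> bool" where
  "bounded_variation \<rho> \<longleftrightarrow> (\<exists>B. \<forall>(n::nat) (xs::nat \<Rightarrow> real).
      (\<forall>k<n. xs k \<le> xs (Suc k)) \<longrightarrow> (\<Sum>k<n. \<bar>\<rho> (xs (Suc k)) - \<rho> (xs k)\<bar>) \<le> B)"

definition noise_kernel :: "(real \<Rightarrow> real) \<Rightarrow> bool" where
  "noise_kernel \<rho> \<longleftrightarrow> bounded_variation \<rho> \<and> integral\<^sup>L lborel \<rho> = 1 \<and>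
      (\<exists>R. \<forall>x. \<bar>x\<bar> > R \<longrightarrow> \<rho> x = 0)"

(* density of rho * (T_* (f dx restricted to [0,1])) on the real line *)
definition conv_push :: "(real \<Rightarrow> real) \<Rightarrow> (real \<Rightarrow> real) \<Rightarrow> (real \<Rightarrow> real) \<Rightarrow> real \<Rightarrow> real" where
  "conv_push \<rho> T f z = (LINT y:{0..1}|lborel. \<rho> (z - T y) * f y)"

(* L_{T,rho} f = N_rho L_T f = pi_*(rho * hat(L_T f)), pi(x) = dist(x, 2Z):
   the pushforward density under pi at x in [0,1] is the sum over the preimages 2i+x, 2i-x *)
definition transfer :: "(real \<Rightarrow> real) \<Rightarrow> (real \<Rightarrow> real) \<Rightarrow> (real \<Rightarrow> real) \<Rightarrow> real \<Rightarrow> real" where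
  "transfer \<rho> T f x = (if x \<in> {0..1} then
      (\<Sum>\<^sub>\<infinity>i::int. conv_push \<rho> T f (2 * of_int i + x) + conv_push \<rho> T f (2 * of_int i - x))
    else 0)"

definition L1norm :: "(real \<Rightarrow> real) \<Rightarrow> real" where
  "L1norm f = (LINT x:{0..1}|lborel. \<bar>f x\<bar>)"

definition in_V :: "(real \<Rightarrow> real) \<Rightarrow> bool" where
  "in_V \<nu> \<longleftrightarrow> set_integrable lborel {0..1} \<nu> \<and> (LINT x:{0..1}|lborel. \<nu> x) = 0"

definition stationary :: "(real \<Rightarrow> real) \<Rightarrow> (real \<Rightarrow> real) \<Rightarrow> (real \<Rightarrow> real) \<Rightarrow> bool" where
  "stationary \<rho> T f \<longleftrightarrow> set_integrable lborel {0..1} f \<and>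
     (AE x in lborel. x \<in> {0..1} \<longrightarrow> f x \<ge> 0) \<and> (LINT x:{0..1}|lborel. f x) = 1 \<and>
     (AE x in lborel. x \<in> {0..1} \<longrightarrow> transfer \<rho> T f x = f x)"

end

theory Submission
  imports Defs
begin


definition kern :: "(real \<Rightarrow> real) \<Rightarrow> bool" where
  "kern k \<longleftrightarrow> k \<in> borel_measurable borel \<and> (\<exists>B. \<forall>x. \<bar>k x\<bar> \<le> B) \<and> (\<exists>R. \<forall>x. \<bar>x\<bar> > R \<longrightarrow> k x = 0)"

definition TrOK :: "(real \<Rightarrow> real) \<Rightarrow> bool" where
  "TrOK Tr \<longleftrightarrow> Tr \<in> borel_measurable borel \<and> (\<forall>y. Tr y \<in> {0..1})"

definition Phi :: "(real\<Rightarrow>real) \<Rightarrow> (real\<Rightarrow>real) \<Rightarrow> (real\<Rightarrow>real) \<Rightarrow> real \<Rightarrow> real" where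
  "Phi Tr k H z = (\<integral>y. k (z - Tr y) * H y \<partial>lborel)"

definition Q :: "(real\<Rightarrow>real) \<Rightarrow> int set \<Rightarrow> (real\<Rightarrow>real) \<Rightarrow> (real\<Rightarrow>real) \<Rightarrow> real \<Rightarrow> real" where
  "Q Tr S k H x = indicator {0..1} x * (\<Sum>i\<in>S. Phi Tr k H (2 * of_int i + x) + Phi Tr k H (2 * of_int i - x))"

lemma kern_integrable:
  assumes "kern k" shows "integrable lborel k"
proof -
  obtain B R where B: "\<And>x. \<bar>k x\<bar> \<le> B" and R: "\<And>x. \<bar>x\<bar> > R \<Longrightarrow> k x = 0" and m: "k \<in> borel_measurable borel"
    using assms unfolding kern_def by blast
  show ?thesis
    apply (rule integrableI_bounded_set[where A="{-R..R}" and B=B])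
    using m B R by (auto simp: not_less emeasure_lborel_Icc_eq)
qed

lemma kern_diff: "kern k1 \<Longrightarrow> kern k2 \<Longrightarrow> kern (\<lambda>x. k1 x - k2 x)"
proof -
  assume a: "kern k1" "kern k2"
  then obtain B1 R1 B2 R2 where B: "\<And>x. \<bar>k1 x\<bar> \<le> B1" "\<And>x. \<bar>k2 x\<bar> \<le> B2"
    and R: "\<And>x. \<bar>x\<bar> > R1 \<Longrightarrow> k1 x = 0" "\<And>x. \<bar>x\<bar> > R2 \<Longrightarrow> k2 x = 0"
    and m: "k1 \<in> borel_measurable borel" "k2 \<in> borel_measurable borel"
    unfolding kern_def by blast
  have "\<forall>x. \<bar>k1 x - k2 x\<bar> \<le> B1 + B2" using B abs_triangle_ineq4 order_trans add_mono by metis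
  moreover have "\<forall>x. \<bar>x\<bar> > max R1 R2 \<longrightarrow> k1 x - k2 x = 0" using R by auto
  moreover have "(\<lambda>x. k1 x - k2 x) \<in> borel_measurable borel" using m by measurable
  ultimately show ?thesis unfolding kern_def by blast
qed

lemma integrand_integrable:
  assumes "kern k" "TrOK Tr" "integrable lborel H"
  shows "integrable lborel (\<lambda>y. k (z - Tr y) * H y)"
proof -
  obtain B where B: "\<And>x. \<bar>k x\<bar> \<le> B" and m[measurable]: "k \<in> borel_measurable borel"
    using assms unfolding kern_def by blast
  have [measurable]: "Tr \<in> borel_measurable borel" using assms(2) unfolding TrOK_def by blast
  have [measurable]: "H \<in> borel_measurable lborel" using assms(3) by auto
  show ?thesis
  proof (rule Bochner_Integration.integrable_bound[of lborel "\<lambda>y. B * H y"])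
    show "integrable lborel (\<lambda>y. B * H y)" using assms(3) by auto
    show "(\<lambda>y. k (z - Tr y) * H y) \<in> borel_measurable lborel" by measurable
    show "AE x in lborel. norm (k (z - Tr x) * H x) \<le> norm (B * H x)"
    proof (rule AE_I2)
      fix x have "0 \<le> B" using B[of 0] by linarith
      then show "norm (k (z - Tr x) * H x) \<le> norm (B * H x)"
        using B[of "z - Tr x"] by (simp add: abs_mult mult_right_mono)
    qed
  qed
qed

lemma Phi_meas:
  assumes "kern k" "TrOK Tr" "integrable lborel H"
  shows "Phi Tr k H \<in> borel_measurable borel"
proof -
  have [measurable]: "k \<in> borel_measurable borel"
    using assms unfolding kern_def by blast
  have [measurable]: "Tr \<in> borel_measurable borel" using assms(2) unfolding TrOK_def by blast
  have [measurable]: "H \<in> borel_measurable lborel" using assms(3) by auto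
  show ?thesis unfolding Phi_def
    by (rule lborel.borel_measurable_lebesgue_integral) measurable
qed

lemma Phi_diff_H:
  assumes "kern k" "TrOK Tr" "integrable lborel H1" "integrable lborel H2"
  shows "Phi Tr k (\<lambda>y. H1 y - H2 y) z = Phi Tr k H1 z - Phi Tr k H2 z"
  unfolding Phi_def using integrand_integrable[OF assms(1,2,3)] integrand_integrable[OF assms(1,2,4)]
  by (simp add: right_diff_distrib)

lemma Phi_add_H:
  assumes "kern k" "TrOK Tr" "integrable lborel H1" "integrable lborel H2"
  shows "Phi Tr k (\<lambda>y. H1 y + H2 y) z = Phi Tr k H1 z + Phi Tr k H2 z"
  unfolding Phi_def using integrand_integrable[OF assms(1,2,3)] integrand_integrable[OF assms(1,2,4)]
  by (simp add: distrib_left)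

lemma Phi_diff_k:
  assumes "kern k1" "kern k2" "TrOK Tr" "integrable lborel H"
  shows "Phi Tr (\<lambda>x. k1 x - k2 x) H z = Phi Tr k1 H z - Phi Tr k2 H z"
  unfolding Phi_def using integrand_integrable[OF assms(1,3,4)] integrand_integrable[OF assms(2,3,4)]
  by (simp add: left_diff_distrib)

lemma Phi_AE:
  assumes "kern k" "TrOK Tr" "integrable lborel H1" "integrable lborel H2"
    and "AE y in lborel. H1 y = H2 y"
  shows "Phi Tr k H1 z = Phi Tr k H2 z"
  unfolding Phi_def
proof (rule integral_cong_AE)
  have [measurable]: "k \<in> borel_measurable borel"
    using assms unfolding kern_def by blast
  have [measurable]: "Tr \<in> borel_measurable borel" using assms(2) unfolding TrOK_def by blast
  have [measurable]: "H1 \<in> borel_measurable lborel" "H2 \<in> borel_measurable lborel" using assms(3,4) by auto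
  show "(\<lambda>y. k (z - Tr y) * H1 y) \<in> borel_measurable lborel" by measurable
  show "(\<lambda>y. k (z - Tr y) * H2 y) \<in> borel_measurable lborel" by measurable
  show "AE y in lborel. k (z - Tr y) * H1 y = k (z - Tr y) * H2 y" using assms(5) by auto
qed

lemma Phi_zero:
  assumes "TrOK Tr" "\<And>x. \<bar>x\<bar> > R \<Longrightarrow> k x = 0" "\<bar>z\<bar> > R + 1"
  shows "Phi Tr k H z = 0"
proof -
  have "k (z - Tr y) = 0" for y
  proof -
    have "Tr y \<in> {0..1}" using assms(1) unfolding TrOK_def by blast
    then have "\<bar>z - Tr y\<bar> > R" using assms(3) by auto
    then show ?thesis using assms(2) by blast
  qed
  then show ?thesis unfolding Phi_def by simp
qed

lemma Q_diff_H:
  assumes "kern k" "TrOK Tr" "integrable lborel H1" "integrable lborel H2"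
  shows "Q Tr S k (\<lambda>y. H1 y - H2 y) x = Q Tr S k H1 x - Q Tr S k H2 x"
  unfolding Q_def Phi_diff_H[OF assms] by (simp add: sum_subtractf algebra_simps)

lemma Q_add_H:
  assumes "kern k" "TrOK Tr" "integrable lborel H1" "integrable lborel H2"
  shows "Q Tr S k (\<lambda>y. H1 y + H2 y) x = Q Tr S k H1 x + Q Tr S k H2 x"
  unfolding Q_def Phi_add_H[OF assms] by (simp add: sum.distrib algebra_simps)

lemma Q_diff_k:
  assumes "kern k1" "kern k2" "TrOK Tr" "integrable lborel H"
  shows "Q Tr S (\<lambda>x. k1 x - k2 x) H x = Q Tr S k1 H x - Q Tr S k2 H x"
  unfolding Q_def Phi_diff_k[OF assms] by (simp add: sum_subtractf algebra_simps)

lemma Q_AE: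
  assumes "kern k" "TrOK Tr" "integrable lborel H1" "integrable lborel H2"
    and "AE y in lborel. H1 y = H2 y"
  shows "Q Tr S k H1 x = Q Tr S k H2 x"
  unfolding Q_def Phi_AE[OF assms] ..

lemma Q_meas:
  assumes "kern k" "TrOK Tr" "integrable lborel H"
  shows "Q Tr S k H \<in> borel_measurable borel"
proof -
  have [measurable]: "Phi Tr k H \<in> borel_measurable borel" by (rule Phi_meas[OF assms])
  show ?thesis unfolding Q_def by measurable
qed

lemma ind_sum_le1:
  fixes z :: real and S :: "int set"
  shows "(\<Sum>i\<in>S. indicator {2 * of_int i .. 2 * of_int i + 1} z) \<le> (1::real)"
proof -
  have "(\<Sum>i\<in>S. indicator {2 * of_int i .. 2 * of_int i + 1} z) \<le> (\<Sum>i\<in>S. if i = \<lfloor>z/2\<rfloor> then 1 else (0::real))"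
  proof (rule sum_mono)
    fix i assume "i \<in> S"
    show "indicator {2 * of_int i .. 2 * of_int i + 1} z \<le> (if i = \<lfloor>z/2\<rfloor> then 1 else (0::real))"
    proof (cases "z \<in> {2 * of_int i .. 2 * of_int i + 1}")
      case True
      then have "\<lfloor>z/2\<rfloor> = i" by (subst floor_eq_iff) auto
      then show ?thesis using True by simp
    qed simp
  qed
  also have "\<dots> \<le> 1" by (cases "finite S") (auto simp: sum.delta)
  finally show ?thesis .
qed

lemma ind_sum_le2:
  fixes z :: real and S :: "int set"
  shows "(\<Sum>i\<in>S. indicator {2 * of_int i - 1 .. 2 * of_int i} z) \<le> (1::real)"
proof -
  have "(\<Sum>i\<in>S. indicator {2 * of_int i - 1 .. 2 * of_int i} z) \<le> (\<Sum>i\<in>S. if i = \<lceil>z/2\<rceil> then 1 else (0::real))"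
  proof (rule sum_mono)
    fix i assume "i \<in> S"
    show "indicator {2 * of_int i - 1 .. 2 * of_int i} z \<le> (if i = \<lceil>z/2\<rceil> then 1 else (0::real))"
    proof (cases "z \<in> {2 * of_int i - 1 .. 2 * of_int i}")
      case True
      then have "\<lceil>z/2\<rceil> = i" by (subst ceiling_eq_iff) auto
      then show ?thesis using True by simp
    qed simp
  qed
  also have "\<dots> \<le> 1" by (cases "finite S") (auto simp: sum.delta)
  finally show ?thesis .
qed

lemma Q_nn_bound:
  assumes k: "kern k" and Tr: "TrOK Tr" and H: "integrable lborel H" and S: "finite S"
  shows "(\<integral>\<^sup>+x. ennreal \<bar>Q Tr S k H x\<bar> \<partial>lborel)
     \<le> 2 * (\<integral>\<^sup>+z. ennreal \<bar>k z\<bar> \<partial>lborel) * (\<integral>\<^sup>+y. ennreal \<bar>H y\<bar> \<partial>lborel)"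
proof -
  have [measurable]: "k \<in> borel_measurable borel"
    using k unfolding kern_def by blast
  have [measurable]: "Tr \<in> borel_measurable borel" using Tr unfolding TrOK_def by blast
  have [measurable]: "H \<in> borel_measurable lborel" using H by auto
  define G where "G z = (\<integral>\<^sup>+y. ennreal (\<bar>k (z - Tr y)\<bar> * \<bar>H y\<bar>) \<partial>lborel)" for z
  have Gm[measurable]: "G \<in> borel_measurable borel" unfolding G_def
    by (rule lborel.borel_measurable_nn_integral) measurable
  have PhiG: "ennreal \<bar>Phi Tr k H z\<bar> \<le> G z" for z
    using integral_norm_bound_ennreal[OF integrand_integrable[OF k Tr H, of z]]
    by (simp add: Phi_def G_def abs_mult)
  define A where "A i = {2 * of_int i .. 2 * of_int i + (1::real)}" for i :: int
  define B where "B i = {2 * of_int i - 1 .. 2 * of_int (i::int) :: real}" for i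
  have pt: "ennreal \<bar>Q Tr S k H x\<bar> \<le> (\<Sum>i\<in>S. indicator {0..1} x * G (2 * of_int i + x) + indicator {0..1} x * G (2 * of_int i - x))" for x
  proof (cases "x \<in> {0..1}")
    case True
    have "\<bar>Q Tr S k H x\<bar> \<le> (\<Sum>i\<in>S. \<bar>Phi Tr k H (2 * of_int i + x)\<bar> + \<bar>Phi Tr k H (2 * of_int i - x)\<bar>)"
      unfolding Q_def using True
      by (simp add: order_trans[OF sum_abs] sum_mono abs_triangle_ineq)
    then have "ennreal \<bar>Q Tr S k H x\<bar> \<le> ennreal (\<Sum>i\<in>S. \<bar>Phi Tr k H (2 * of_int i + x)\<bar> + \<bar>Phi Tr k H (2 * of_int i - x)\<bar>)"
      by (rule ennreal_leI)
    also have "\<dots> = (\<Sum>i\<in>S. ennreal \<bar>Phi Tr k H (2 * of_int i + x)\<bar> + ennreal \<bar>Phi Tr k H (2 * of_int i - x)\<bar>)"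
      by (subst sum_ennreal[symmetric]) (auto intro!: sum.cong)
    also have "\<dots> \<le> (\<Sum>i\<in>S. G (2 * of_int i + x) + G (2 * of_int i - x))"
      by (intro sum_mono add_mono PhiG)
    finally show ?thesis using True by simp
  next
    case False
    then show ?thesis unfolding Q_def by simp
  qed
  have aff1: "(\<integral>\<^sup>+x. indicator {0..1} x * G (2 * of_int i + x) \<partial>lborel) = (\<integral>\<^sup>+z. indicator (A i) z * G z \<partial>lborel)" for i
  proof -
    have "(\<integral>\<^sup>+z. indicator (A i) z * G z \<partial>lborel) = ennreal \<bar>1::real\<bar> * (\<integral>\<^sup>+x. indicator (A i) (2 * of_int i + 1 * x) * G (2 * of_int i + 1 * x) \<partial>lborel)"
      by (rule nn_integral_real_affine[where f="\<lambda>z. indicator (A i) z * G z"]) (auto simp: A_def)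
    also have "\<dots> = (\<integral>\<^sup>+x. indicator (A i) (2 * of_int i + x) * G (2 * of_int i + x) \<partial>lborel)"
      by simp
    also have "\<dots> = (\<integral>\<^sup>+x. indicator {0..1} x * G (2 * of_int i + x) \<partial>lborel)"
      by (intro nn_integral_cong) (auto simp: A_def split: split_indicator)
    finally show ?thesis by simp
  qed
  have aff2: "(\<integral>\<^sup>+x. indicator {0..1} x * G (2 * of_int i - x) \<partial>lborel) = (\<integral>\<^sup>+z. indicator (B i) z * G z \<partial>lborel)" for i
  proof -
    have "(\<integral>\<^sup>+z. indicator (B i) z * G z \<partial>lborel) = ennreal \<bar>-1::real\<bar> * (\<integral>\<^sup>+x. indicator (B i) (2 * of_int i + (-1) * x) * G (2 * of_int i + (-1) * x) \<partial>lborel)"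
      by (rule nn_integral_real_affine[where f="\<lambda>z. indicator (B i) z * G z"]) (auto simp: B_def)
    also have "\<dots> = (\<integral>\<^sup>+x. indicator (B i) (2 * of_int i - x) * G (2 * of_int i - x) \<partial>lborel)"
      by simp
    also have "\<dots> = (\<integral>\<^sup>+x. indicator {0..1} x * G (2 * of_int i - x) \<partial>lborel)"
      by (intro nn_integral_cong) (auto simp: B_def split: split_indicator)
    finally show ?thesis by simp
  qed
  have indle: "(\<Sum>i\<in>S. indicator (A i) z + indicator (B i) z :: ennreal) \<le> 2" for z
  proof -
    have "(\<Sum>i\<in>S. indicator (A i) z + indicator (B i) z :: ennreal) = ennreal (\<Sum>i\<in>S. indicator (A i) z + indicator (B i) z)"
      by (simp add: ennreal_indicator[symmetric] ennreal_plus[symmetric] del: ennreal_plus)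
    also have "\<dots> \<le> ennreal 2"
      using ind_sum_le1[where S=S and z=z] ind_sum_le2[where S=S and z=z] unfolding A_def B_def
      by (intro ennreal_leI) (simp add: sum.distrib)
    finally show ?thesis by simp
  qed
  have "(\<integral>\<^sup>+x. ennreal \<bar>Q Tr S k H x\<bar> \<partial>lborel) \<le> (\<integral>\<^sup>+x. (\<Sum>i\<in>S. indicator {0..1} x * G (2 * of_int i + x) + indicator {0..1} x * G (2 * of_int i - x)) \<partial>lborel)"
    by (intro nn_integral_mono pt)
  also have "\<dots> = (\<Sum>i\<in>S. (\<integral>\<^sup>+x. indicator {0..1} x * G (2 * of_int i + x) \<partial>lborel) + (\<integral>\<^sup>+x. indicator {0..1} x * G (2 * of_int i - x) \<partial>lborel))"
    by (subst nn_integral_sum) (auto intro!: sum.cong nn_integral_add)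
  also have "\<dots> = (\<Sum>i\<in>S. (\<integral>\<^sup>+z. indicator (A i) z * G z \<partial>lborel) + (\<integral>\<^sup>+z. indicator (B i) z * G z \<partial>lborel))"
    by (simp add: aff1 aff2)
  also have "\<dots> = (\<Sum>i\<in>S. (\<integral>\<^sup>+z. indicator (A i) z * G z + indicator (B i) z * G z \<partial>lborel))"
    by (intro sum.cong refl nn_integral_add[symmetric]) (auto simp: A_def B_def)
  also have "\<dots> = (\<integral>\<^sup>+z. (\<Sum>i\<in>S. indicator (A i) z * G z + indicator (B i) z * G z) \<partial>lborel)"
    by (intro nn_integral_sum[symmetric]) (auto simp: A_def B_def)
  also have "\<dots> = (\<integral>\<^sup>+z. (\<Sum>i\<in>S. indicator (A i) z + indicator (B i) z) * G z \<partial>lborel)"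
    by (simp add: sum_distrib_right distrib_right)
  also have "\<dots> \<le> (\<integral>\<^sup>+z. 2 * G z \<partial>lborel)"
    by (intro nn_integral_mono mult_right_mono indle) simp
  also have "\<dots> = 2 * (\<integral>\<^sup>+z. G z \<partial>lborel)"
    by (rule nn_integral_cmult) simp
  also have "(\<integral>\<^sup>+z. G z \<partial>lborel) = (\<integral>\<^sup>+z. ennreal \<bar>k z\<bar> \<partial>lborel) * (\<integral>\<^sup>+y. ennreal \<bar>H y\<bar> \<partial>lborel)"
  proof -
    have "(\<integral>\<^sup>+z. G z \<partial>lborel) = (\<integral>\<^sup>+y. (\<integral>\<^sup>+z. ennreal (\<bar>k (z - Tr y)\<bar> * \<bar>H y\<bar>) \<partial>lborel) \<partial>lborel)"
      unfolding G_def by (rule lborel_pair.Fubini'[symmetric]) measurable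
    also have "\<dots> = (\<integral>\<^sup>+y. (\<integral>\<^sup>+z. ennreal \<bar>k z\<bar> \<partial>lborel) * ennreal \<bar>H y\<bar> \<partial>lborel)"
    proof (intro nn_integral_cong)
      fix y
      have "(\<integral>\<^sup>+z. ennreal (\<bar>k (z - Tr y)\<bar> * \<bar>H y\<bar>) \<partial>lborel) = (\<integral>\<^sup>+z. ennreal \<bar>k (z - Tr y)\<bar> * ennreal \<bar>H y\<bar> \<partial>lborel)"
        by (simp add: ennreal_mult)
      also have "\<dots> = (\<integral>\<^sup>+z. ennreal \<bar>k (z - Tr y)\<bar> \<partial>lborel) * ennreal \<bar>H y\<bar>"
        by (rule nn_integral_multc) measurable
      also have "(\<integral>\<^sup>+z. ennreal \<bar>k (z - Tr y)\<bar> \<partial>lborel) = (\<integral>\<^sup>+z. ennreal \<bar>k z\<bar> \<partial>lborel)"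
        using nn_integral_real_affine[where f="\<lambda>z. ennreal \<bar>k z\<bar>" and c=1 and t="- Tr y"] by simp
      finally show "(\<integral>\<^sup>+z. ennreal (\<bar>k (z - Tr y)\<bar> * \<bar>H y\<bar>) \<partial>lborel) = (\<integral>\<^sup>+z. ennreal \<bar>k z\<bar> \<partial>lborel) * ennreal \<bar>H y\<bar>" .
    qed
    also have "\<dots> = (\<integral>\<^sup>+z. ennreal \<bar>k z\<bar> \<partial>lborel) * (\<integral>\<^sup>+y. ennreal \<bar>H y\<bar> \<partial>lborel)"
      by (rule nn_integral_cmult) measurable
    finally show ?thesis .
  qed
  finally show ?thesis by (simp add: mult.assoc)
qed

lemma Q_integrable:
  assumes k: "kern k" and Tr: "TrOK Tr" and H: "integrable lborel H" and S: "finite S"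
  shows "integrable lborel (Q Tr S k H)"
proof (rule integrableI_bounded)
  show "Q Tr S k H \<in> borel_measurable lborel" using Q_meas[OF k Tr H] by simp
  have "(\<integral>\<^sup>+z. ennreal (norm (k z)) \<partial>lborel) < \<infinity>" using kern_integrable[OF k] integrable_iff_bounded by blast
  moreover have "(\<integral>\<^sup>+z. ennreal (norm (H z)) \<partial>lborel) < \<infinity>" using H integrable_iff_bounded by blast
  ultimately have "2 * (\<integral>\<^sup>+z. ennreal \<bar>k z\<bar> \<partial>lborel) * (\<integral>\<^sup>+y. ennreal \<bar>H y\<bar> \<partial>lborel) < \<infinity>"
    by (simp add: ennreal_mult_less_top)
  then show "(\<integral>\<^sup>+x. ennreal (norm (Q Tr S k H x)) \<partial>lborel) < \<infinity>"
    using Q_nn_bound[OF assms] by simp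
qed

lemma Q_L1:
  assumes k: "kern k" and Tr: "TrOK Tr" and H: "integrable lborel H" and S: "finite S"
  shows "(\<integral>x. \<bar>Q Tr S k H x\<bar> \<partial>lborel) \<le> 2 * (\<integral>z. \<bar>k z\<bar> \<partial>lborel) * (\<integral>y. \<bar>H y\<bar> \<partial>lborel)"
proof -
  have iQ: "integrable lborel (Q Tr S k H)" by (rule Q_integrable[OF assms])
  have ik: "integrable lborel k" by (rule kern_integrable[OF k])
  have e1: "(\<integral>\<^sup>+x. ennreal \<bar>Q Tr S k H x\<bar> \<partial>lborel) = ennreal (\<integral>x. \<bar>Q Tr S k H x\<bar> \<partial>lborel)"
    by (rule nn_integral_eq_integral) (use iQ in auto)
  have e2: "(\<integral>\<^sup>+x. ennreal \<bar>k x\<bar> \<partial>lborel) = ennreal (\<integral>x. \<bar>k x\<bar> \<partial>lborel)"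
    by (rule nn_integral_eq_integral) (use ik in auto)
  have e3: "(\<integral>\<^sup>+x. ennreal \<bar>H x\<bar> \<partial>lborel) = ennreal (\<integral>x. \<bar>H x\<bar> \<partial>lborel)"
    by (rule nn_integral_eq_integral) (use H in auto)
  have a: "0 \<le> (\<integral>x. \<bar>k x\<bar> \<partial>lborel)" "0 \<le> (\<integral>x. \<bar>H x\<bar> \<partial>lborel)" by auto
  have "ennreal (\<integral>x. \<bar>Q Tr S k H x\<bar> \<partial>lborel) \<le> 2 * ennreal (\<integral>x. \<bar>k x\<bar> \<partial>lborel) * ennreal (\<integral>x. \<bar>H x\<bar> \<partial>lborel)"
    using Q_nn_bound[OF assms] e1 e2 e3 by simp
  also have "\<dots> = ennreal (2 * (\<integral>x. \<bar>k x\<bar> \<partial>lborel) * (\<integral>x. \<bar>H x\<bar> \<partial>lborel))"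
    using a by (simp add: ennreal_mult)
  finally show ?thesis using a by (subst (asm) ennreal_le_iff) auto
qed

definition trunc :: "(real \<Rightarrow> real) \<Rightarrow> real \<Rightarrow> real" where
  "trunc T y = (if y \<in> {0..1} then T y else 0)"

definition hr :: "(real \<Rightarrow> real) \<Rightarrow> real \<Rightarrow> real" where
  "hr h y = indicator {0..1} y * h y"

lemma conv_push_Phi: "conv_push k T h z = Phi (trunc T) k (hr h) z"
  unfolding conv_push_def Phi_def set_lebesgue_integral_def
  by (intro Bochner_Integration.integral_cong) (auto simp: trunc_def hr_def split: split_indicator)

lemma transfer_Q:
  fixes N :: int
  assumes R: "\<And>x. \<bar>x\<bar> > R \<Longrightarrow> k x = 0" and "0 \<le> R" and N: "R + 2 \<le> real_of_int N"
    and T: "\<forall>y\<in>{0..1}. T y \<in> {0..1}"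
  shows "transfer k T h = Q (trunc T) {-N..N} k (hr h)"
proof
  fix x
  have TrOK: "\<forall>y. trunc T y \<in> {0..1}" using T by (auto simp: trunc_def)
  show "transfer k T h x = Q (trunc T) {-N..N} k (hr h) x"
  proof (cases "x \<in> {0..1}")
    case False
    then show ?thesis unfolding transfer_def Q_def by (simp only: if_False indicator_simps) simp
  next
    case True
    define F where "F i = Phi (trunc T) k (hr h) (2 * of_int i + x) + Phi (trunc T) k (hr h) (2 * of_int i - x)" for i :: int
    have Z: "Phi (trunc T) k (hr h) z = 0" if "\<bar>z\<bar> > R + 1" for z
    proof -
      have "k (z - trunc T y) = 0" for y
      proof -
        have "trunc T y \<in> {0..1}" using TrOK by blast
        then have "\<bar>z - trunc T y\<bar> > R" using that by auto
        then show ?thesis using R by blast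
      qed
      then show ?thesis unfolding Phi_def by simp
    qed
    have F0: "F i = 0" if "i \<notin> {-N..N}" for i
    proof -
      have "\<bar>real_of_int i\<bar> \<ge> real_of_int N + 1" using that by auto
      then have "\<bar>2 * of_int i + x\<bar> > R + 1" "\<bar>2 * of_int i - x\<bar> > R + 1" using True N \<open>0 \<le> R\<close> by auto
      then show ?thesis unfolding F_def using Z by simp
    qed
    have "transfer k T h x = (\<Sum>\<^sub>\<infinity>i\<in>UNIV. F i)"
      unfolding transfer_def F_def conv_push_Phi using True by simp
    also have "\<dots> = (\<Sum>\<^sub>\<infinity>i\<in>{-N..N}. F i)"
      by (rule infsum_cong_neutral) (use F0 in auto)
    also have "\<dots> = (\<Sum>i\<in>{-N..N}. F i)" by simp
    finally show ?thesis unfolding Q_def F_def using True by simp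
  qed
qed



lemma find_piece:
  fixes a :: "nat \<Rightarrow> real"
  assumes a0: "a 0 = 0" and an: "a n = 1" and y: "0 < y" "y < 1" and yX: "y \<notin> a ` {..n}"
  shows "\<exists>k<n. a k < y \<and> y < a (Suc k)"
proof (rule ccontr)
  assume nex: "\<not> (\<exists>k<n. a k < y \<and> y < a (Suc k))"
  have "m \<le> n \<Longrightarrow> a m < y" for m
  proof (induction m)
    case 0 show ?case using a0 y by simp
  next
    case (Suc m)
    then have "a m < y" "m < n" by auto
    with nex have "\<not> y < a (Suc m)" by blast
    moreover have "a (Suc m) \<noteq> y" using yX Suc.prems by (metis atMost_iff image_eqI)
    ultimately show ?case by simp
  qed
  then have "a n < y" by simp
  then show False using an y by simp
qed

lemma isCont_trunc_out:
  assumes "y < 0 \<or> y > 1" shows "isCont (trunc T) y"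
proof -
  have "open (- {0..1::real})" by auto
  moreover have "y \<in> - {0..1}" using assms by auto
  ultimately have "eventually (\<lambda>x. x \<in> - {0..1}) (nhds y)" by (rule eventually_nhds_in_open)
  then have "eventually (\<lambda>x. trunc T x = (\<lambda>_. 0) x) (nhds y)"
    by (rule eventually_mono) (simp add: trunc_def, linarith)
  then show ?thesis using isCont_cong[where g="\<lambda>_. 0"] by simp
qed

lemma isCont_trunc_in:
  assumes "0 < y" "y < 1" "isCont T y" shows "isCont (trunc T) y"
proof -
  have "open {0<..<1::real}" by auto
  moreover have "y \<in> {0<..<1}" using assms by auto
  ultimately have "eventually (\<lambda>x. x \<in> {0<..<1}) (nhds y)" by (rule eventually_nhds_in_open)
  then have "eventually (\<lambda>x. trunc T x = T x) (nhds y)"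
  proof (rule eventually_mono)
    fix x :: real assume "x \<in> {0<..<1}"
    then have "x \<in> {0..1}" by simp
    then show "trunc T x = T x" by (simp add: trunc_def)
  qed
  then show ?thesis using isCont_cong[of "trunc T" T y] assms(3) by blast
qed

lemma noise_kern:
  assumes "noise_kernel \<rho>" shows "kern \<rho>" "integrable lborel \<rho>"
proof -
  have int: "integrable lborel \<rho>"
    using assms unfolding noise_kernel_def using not_integrable_integral_eq by fastforce
  then show "integrable lborel \<rho>" .
  have m: "\<rho> \<in> borel_measurable borel" using int by (simp add: borel_measurable_integrable)
  obtain B where B: "\<And>(n::nat) (xs::nat \<Rightarrow> real). (\<forall>k<n. xs k \<le> xs (Suc k)) \<Longrightarrow> (\<Sum>k<n. \<bar>\<rho> (xs (Suc k)) - \<rho> (xs k)\<bar>) \<le> B"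
    using assms unfolding noise_kernel_def bounded_variation_def by blast
  have "\<bar>\<rho> x\<bar> \<le> \<bar>\<rho> 0\<bar> + B" for x
  proof -
    have "(\<Sum>k<1. \<bar>\<rho> ((\<lambda>k. if k = 0 then min 0 x else max 0 x) (Suc k)) - \<rho> ((\<lambda>k. if k = 0 then min 0 x else max 0 x) k)\<bar>) \<le> B"
      by (rule B) auto
    then have "\<bar>\<rho> (max 0 x) - \<rho> (min 0 x)\<bar> \<le> B" by simp
    then show ?thesis by (cases "0 \<le> x") (auto simp: max_def min_def)
  qed
  then have "\<exists>B. \<forall>x. \<bar>\<rho> x\<bar> \<le> B" by blast
  moreover have "\<exists>R. \<forall>x. \<bar>x\<bar> > R \<longrightarrow> \<rho> x = 0" using assms unfolding noise_kernel_def by blast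
  ultimately show "kern \<rho>" unfolding kern_def using m by blast
qed

lemma pw_TrOK:
  assumes "piecewise_smooth T" shows "TrOK (trunc T)" "\<forall>y\<in>{0..1}. T y \<in> {0..1}"
proof -
  show T01: "\<forall>y\<in>{0..1}. T y \<in> {0..1}"
    using assms[unfolded piecewise_smooth_def] by (rule conjunct1)
  obtain n a where a0: "a 0 = (0::real)" and an: "a n = 1" and
    P0: "\<forall>k<n. (mono_on {a k<..<a (Suc k)} T \<or> mono_on {a k<..<a (Suc k)} (\<lambda>x. - T x))
              \<and> C2_on {a k<..<a (Suc k)} T
              \<and> (\<exists>l::ereal. ((\<lambda>x. ereal (deriv T x)) \<longlongrightarrow> l) (at_right (a k)))
              \<and> (\<exists>l::ereal. ((\<lambda>x. ereal (deriv T x)) \<longlongrightarrow> l) (at_left (a (Suc k))))"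
    using conjunct2[OF assms[unfolded piecewise_smooth_def]] by (elim exE conjE) (rule that)
  have P: "C2_on {a k<..<a (Suc k)} T" if "k < n" for k using P0[rule_format, OF that] by (elim conjE) assumption
  define X where "X = a ` {..n}"
  have cX: "countable X" unfolding X_def by simp
  have 0: "0 \<in> X" "1 \<in> X" unfolding X_def using a0[symmetric] an[symmetric] by (blast intro: image_eqI)+
  have iC: "isCont (trunc T) y" if y: "y \<notin> X" for y
  proof -
    have "y \<noteq> 0" "y \<noteq> 1" using 0 y by auto
    then consider "y < 0 \<or> y > 1" | "0 < y \<and> y < 1" by linarith
    then show ?thesis
    proof cases
      case 1
      then show ?thesis by (rule isCont_trunc_out)
    next
      case 2
      then have "\<exists>k<n. a k < y \<and> y < a (Suc k)"
        using find_piece[OF a0 an] y unfolding X_def by blast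
      then obtain k where k: "k < n" "a k < y" "y < a (Suc k)" by blast
      obtain T1 T2 where T12: "\<forall>x\<in>{a k<..<a (Suc k)}. (T has_real_derivative T1 x) (at x) \<and> (T1 has_real_derivative T2 x) (at x)"
        using P[OF k(1)] unfolding C2_on_def by (elim exE conjE) (rule that)
      have yin: "y \<in> {a k<..<a (Suc k)}" using k by simp
      have "(T has_real_derivative T1 y) (at y)" using conjunct1[OF bspec[OF T12 yin]] .
      then have cT: "isCont T y" by (rule DERIV_isCont)
      show ?thesis using 2 cT by (intro isCont_trunc_in) auto
    qed
  qed
  then have "continuous_on (- X) (trunc T)"
    by (intro continuous_at_imp_continuous_on ballI) (simp add: Compl_iff)
  then have "trunc T \<in> borel_measurable borel"
    by (rule borel_measurable_continuous_countable_exceptions[OF cX])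
  then show "TrOK (trunc T)" unfolding TrOK_def using T01 by (auto simp: trunc_def)
qed



lemma hr_Q: "hr (Q Tr S k H) = Q Tr S k H"
  unfolding hr_def Q_def by (rule ext) (simp split: split_indicator)

lemma hr_integrable: "set_integrable lborel {0..1} f \<Longrightarrow> integrable lborel (hr f)"
  unfolding set_integrable_def hr_def by simp

lemma L1norm_hr: "L1norm f = (\<integral>x. \<bar>hr f x\<bar> \<partial>lborel)"
  unfolding L1norm_def set_lebesgue_integral_def hr_def
  by (intro Bochner_Integration.integral_cong) (auto simp: abs_mult split: split_indicator)

lemma Qpow_integrable:
  assumes "kern k" "TrOK Tr" "finite S" "integrable lborel H"
  shows "integrable lborel ((Q Tr S k ^^ m) H)"
  by (induction m) (auto intro: Q_integrable[OF assms(1,2) _ assms(3)] assms(4))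

lemma Qpow_AE:
  assumes "kern k" "TrOK Tr" "finite S" "integrable lborel H1" "integrable lborel H2"
    and "AE x in lborel. H1 x = H2 x"
  shows "AE x in lborel. (Q Tr S k ^^ m) H1 x = (Q Tr S k ^^ m) H2 x"
proof (induction m)
  case 0 then show ?case using assms(6) by simp
next
  case (Suc m)
  have "Q Tr S k ((Q Tr S k ^^ m) H1) x = Q Tr S k ((Q Tr S k ^^ m) H2) x" for x
    by (rule Q_AE[OF assms(1,2) Qpow_integrable[OF assms(1-4)] Qpow_integrable[OF assms(1-3,5)] Suc])
  then show ?case by simp
qed

lemma Qpow_add:
  assumes "kern k" "TrOK Tr" "finite S" "integrable lborel X" "integrable lborel Y"
  shows "(Q Tr S k ^^ m) (\<lambda>x. X x + Y x) = (\<lambda>x. (Q Tr S k ^^ m) X x + (Q Tr S k ^^ m) Y x)"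
proof (induction m)
  case 0 then show ?case by simp
next
  case (Suc m)
  show ?case
    by (rule ext) (simp add: Suc Q_add_H[OF assms(1,2) Qpow_integrable[OF assms(1-4)] Qpow_integrable[OF assms(1-3,5)]])
qed

lemma Qpow_L1:
  assumes "kern k" "TrOK Tr" "finite S" "integrable lborel H"
  shows "(\<integral>x. \<bar>(Q Tr S k ^^ m) H x\<bar> \<partial>lborel) \<le> (2 * (\<integral>z. \<bar>k z\<bar> \<partial>lborel)) ^ m * (\<integral>x. \<bar>H x\<bar> \<partial>lborel)"
proof (induction m)
  case 0 then show ?case by simp
next
  case (Suc m)
  have "(\<integral>x. \<bar>(Q Tr S k ^^ Suc m) H x\<bar> \<partial>lborel) \<le> 2 * (\<integral>z. \<bar>k z\<bar> \<partial>lborel) * (\<integral>x. \<bar>(Q Tr S k ^^ m) H x\<bar> \<partial>lborel)"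
    using Q_L1[OF assms(1,2) Qpow_integrable[OF assms] assms(3)] by simp
  also have "\<dots> \<le> 2 * (\<integral>z. \<bar>k z\<bar> \<partial>lborel) * ((2 * (\<integral>z. \<bar>k z\<bar> \<partial>lborel)) ^ m * (\<integral>x. \<bar>H x\<bar> \<partial>lborel))"
    by (intro mult_left_mono Suc) auto
  finally show ?case by (simp add: mult.assoc)
qed

lemma transfer_pow:
  assumes "\<And>h. transfer k T h = Q Tr S k (hr h)"
  shows "hr ((transfer k T ^^ m) h) = (Q Tr S k ^^ m) (hr h)"
proof (induction m)
  case 0 then show ?case by simp
next
  case (Suc m)
  have "hr ((transfer k T ^^ Suc m) h) = hr (Q Tr S k (hr ((transfer k T ^^ m) h)))"
    by (simp add: assms)
  also have "\<dots> = Q Tr S k ((Q Tr S k ^^ m) (hr h))" by (simp add: hr_Q Suc)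
  finally show ?case by simp
qed

lemma stat_AE:
  assumes "stationary \<rho> T f" "transfer \<rho> T f = Q Tr S \<rho> (hr f)"
  shows "AE x in lborel. Q Tr S \<rho> (hr f) x = hr f x"
proof -
  have "AE x in lborel. x \<in> {0..1} \<longrightarrow> transfer \<rho> T f x = f x" using assms(1) unfolding stationary_def by blast
  then show ?thesis
  proof (rule eventually_mono)
    fix x assume h: "x \<in> {0..1} \<longrightarrow> transfer \<rho> T f x = f x"
    show "Q Tr S \<rho> (hr f) x = hr f x"
    proof (cases "x \<in> {0..1}")
      case True then show ?thesis using h assms(2) by (simp add: hr_def)
    next
      case False then show ?thesis by (simp add: hr_def Q_def)
    qed
  qed
qed



theorem theorem37:
  fixes T \<rho>1 :: "real \<Rightarrow> real" and i :: nat
  assumes "piecewise_smooth T" and "noise_kernel \<rho>1"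
    and "\<exists>c<1. \<forall>\<nu>. in_V \<nu> \<longrightarrow> L1norm ((transfer \<rho>1 T ^^ i) \<nu>) \<le> c * L1norm \<nu>"
  shows "\<exists>C>0. \<forall>\<rho>2 f1 f2. noise_kernel \<rho>2 \<longrightarrow> stationary \<rho>1 T f1 \<longrightarrow> stationary \<rho>2 T f2 \<longrightarrow>
           L1norm (\<lambda>x. f2 x - f1 x) \<le> C * (LINT x|lborel. \<bar>\<rho>1 x - \<rho>2 x\<bar>)"
proof -
  obtain c where c1: "c < 1" and contr: "\<And>\<nu>. in_V \<nu> \<Longrightarrow> L1norm ((transfer \<rho>1 T ^^ i) \<nu>) \<le> c * L1norm \<nu>"
    using assms(3) by blast
  have k1: "kern \<rho>1" and i1: "integrable lborel \<rho>1" using noise_kern[OF assms(2)] by auto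
  have TrOK: "TrOK (trunc T)" and T01: "\<forall>y\<in>{0..1}. T y \<in> {0..1}" using pw_TrOK[OF assms(1)] by auto
  define M where "M = 2 * (\<integral>z. \<bar>\<rho>1 z\<bar> \<partial>lborel)"
  have M0: "0 \<le> M" unfolding M_def by simp
  define K where "K = (\<Sum>j<i. M ^ j)"
  have K0: "0 \<le> K" unfolding K_def using M0 by (simp add: sum_nonneg)
  define C where "C = 2 * K / (1 - c) + 1"
  have KC: "0 \<le> 2 * K / (1 - c)" using K0 c1 by simp
  show ?thesis
  proof (intro exI[of _ C] conjI allI impI)
    show "0 < C" unfolding C_def using KC by linarith
    fix \<rho>2 f1 f2 assume k2n: "noise_kernel \<rho>2" and s1: "stationary \<rho>1 T f1" and s2: "stationary \<rho>2 T f2"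
    have k2: "kern \<rho>2" and i2: "integrable lborel \<rho>2" using noise_kern[OF k2n] by auto
    obtain R1 where R1: "\<forall>x. \<bar>x\<bar> > R1 \<longrightarrow> \<rho>1 x = 0" using k1 unfolding kern_def by blast
    obtain R2 where R2: "\<forall>x. \<bar>x\<bar> > R2 \<longrightarrow> \<rho>2 x = 0" using k2 unfolding kern_def by blast
    define R where "R = max (max R1 R2) 0"
    define N where "N = \<lceil>R\<rceil> + 2"
    have RN: "R + 2 \<le> real_of_int N" unfolding N_def using le_of_int_ceiling[of R] by simp
    have R0: "0 \<le> R" unfolding R_def by simp
    define S where "S = {-N..N}"
    have fS: "finite S" unfolding S_def by simp
    have tr1: "transfer \<rho>1 T h = Q (trunc T) S \<rho>1 (hr h)" for h
      unfolding S_def by (rule transfer_Q[OF _ R0 RN T01]) (use R1 in \<open>auto simp: R_def\<close>)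
    have tr2: "transfer \<rho>2 T h = Q (trunc T) S \<rho>2 (hr h)" for h
      unfolding S_def by (rule transfer_Q[OF _ R0 RN T01]) (use R2 in \<open>auto simp: R_def\<close>)
    define A where "A = Q (trunc T) S \<rho>1"
    define F1 where "F1 = hr f1"
    define F2 where "F2 = hr f2"
    have si1: "set_integrable lborel {0..1} f1" and si2: "set_integrable lborel {0..1} f2"
      using s1 s2 unfolding stationary_def by auto
    have iF1: "integrable lborel F1" unfolding F1_def by (rule hr_integrable[OF si1])
    have iF2: "integrable lborel F2" unfolding F2_def by (rule hr_integrable[OF si2])
    define hv where "hv = hr (\<lambda>x. f2 x - f1 x)"
    have hv_eq: "hv = (\<lambda>x. F2 x - F1 x)" unfolding hv_def F1_def F2_def hr_def
      by (rule ext) (simp add: algebra_simps)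
    have ihv: "integrable lborel hv" using hv_eq iF1 iF2 by simp
    define g where "g = Q (trunc T) S (\<lambda>x. \<rho>2 x - \<rho>1 x) F2"
    have ig: "integrable lborel g" unfolding g_def by (rule Q_integrable[OF kern_diff[OF k2 k1] TrOK iF2 fS])
    have g_eq: "g x = Q (trunc T) S \<rho>2 F2 x - Q (trunc T) S \<rho>1 F2 x" for x
      unfolding g_def by (rule Q_diff_k[OF k2 k1 TrOK iF2])
    have st1: "AE x in lborel. A F1 x = F1 x" unfolding A_def F1_def by (rule stat_AE[OF s1 tr1])
    have st2: "AE x in lborel. Q (trunc T) S \<rho>2 F2 x = F2 x" unfolding F2_def by (rule stat_AE[OF s2 tr2])
    have Ahv: "A hv x = A F2 x - A F1 x" for x
      unfolding hv_eq A_def by (rule Q_diff_H[OF k1 TrOK iF2 iF1])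
    have key: "AE x in lborel. hv x = A hv x + g x"
      using st1 st2
    proof eventually_elim
      case (elim x)
      then show ?case using Ahv[of x] g_eq[of x] by (simp add: hv_eq A_def)
    qed
    have iAhv: "integrable lborel (A hv)" unfolding A_def by (rule Q_integrable[OF k1 TrOK ihv fS])
    have iAg: "integrable lborel (\<lambda>x. A hv x + g x)" using iAhv ig by simp
    have iP: "integrable lborel ((A ^^ m) H)" if "integrable lborel H" for m H
      unfolding A_def by (rule Qpow_integrable[OF k1 TrOK fS that])
    have tele: "AE x in lborel. hv x = (A ^^ m) hv x + (\<Sum>j<m. (A ^^ j) g x)" for m
    proof (induction m)
      case 0 then show ?case by simp
    next
      case (Suc m)
      have e1: "AE x in lborel. (A ^^ m) hv x = (A ^^ m) (\<lambda>x. A hv x + g x) x"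
        unfolding A_def by (rule Qpow_AE[OF k1 TrOK fS ihv iAg[unfolded A_def] key[unfolded A_def]])
      have e2: "(A ^^ m) (\<lambda>x. A hv x + g x) = (\<lambda>x. (A ^^ m) (A hv) x + (A ^^ m) g x)"
        unfolding A_def by (rule Qpow_add[OF k1 TrOK fS iAhv[unfolded A_def] ig])
      have e3: "(A ^^ m) (A hv) = (A ^^ Suc m) hv" by (simp only: funpow_Suc_right o_apply)
      from Suc e1 show ?case
      proof eventually_elim
        case (elim x)
        then show ?case using e2 e3 by (simp add: fun_eq_iff)
      qed
    qed
    have iPg: "integrable lborel ((A ^^ j) g)" for j by (rule iP[OF ig])
    have iPhv: "integrable lborel ((A ^^ i) hv)" by (rule iP[OF ihv])
    have n1: "(\<integral>x. \<bar>hv x\<bar> \<partial>lborel) \<le> (\<integral>x. \<bar>(A ^^ i) hv x\<bar> \<partial>lborel) + (\<Sum>j<i. \<integral>x. \<bar>(A ^^ j) g x\<bar> \<partial>lborel)"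
    proof -
      have isum: "integrable lborel (\<lambda>x. (A ^^ i) hv x + (\<Sum>j<i. (A ^^ j) g x))"
        using iPhv iPg by (intro Bochner_Integration.integrable_add Bochner_Integration.integrable_sum) auto
      have "(\<integral>x. \<bar>hv x\<bar> \<partial>lborel) = (\<integral>x. \<bar>(A ^^ i) hv x + (\<Sum>j<i. (A ^^ j) g x)\<bar> \<partial>lborel)"
      proof (rule integral_cong_AE)
        show "(\<lambda>x. \<bar>hv x\<bar>) \<in> borel_measurable lborel" using ihv by auto
        show "(\<lambda>x. \<bar>(A ^^ i) hv x + (\<Sum>j<i. (A ^^ j) g x)\<bar>) \<in> borel_measurable lborel"
          using isum by (intro borel_measurable_abs) auto
        show "AE x in lborel. \<bar>hv x\<bar> = \<bar>(A ^^ i) hv x + (\<Sum>j<i. (A ^^ j) g x)\<bar>"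
          using tele[of i] by eventually_elim simp
      qed
      also have "\<dots> \<le> (\<integral>x. \<bar>(A ^^ i) hv x\<bar> + (\<Sum>j<i. \<bar>(A ^^ j) g x\<bar>) \<partial>lborel)"
      proof (rule integral_mono)
        show "integrable lborel (\<lambda>x. \<bar>(A ^^ i) hv x + (\<Sum>j<i. (A ^^ j) g x)\<bar>)" using isum by auto
        show "integrable lborel (\<lambda>x. \<bar>(A ^^ i) hv x\<bar> + (\<Sum>j<i. \<bar>(A ^^ j) g x\<bar>))"
          using iPhv iPg by (intro Bochner_Integration.integrable_add Bochner_Integration.integrable_sum integrable_abs) auto
        fix x
        show "\<bar>(A ^^ i) hv x + (\<Sum>j<i. (A ^^ j) g x)\<bar> \<le> \<bar>(A ^^ i) hv x\<bar> + (\<Sum>j<i. \<bar>(A ^^ j) g x\<bar>)"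
          using abs_triangle_ineq[of "(A ^^ i) hv x" "\<Sum>j<i. (A ^^ j) g x"] sum_abs[of "\<lambda>j. (A ^^ j) g x" "{..<i}"]
          by linarith
      qed
      also have "\<dots> = (\<integral>x. \<bar>(A ^^ i) hv x\<bar> \<partial>lborel) + (\<Sum>j<i. \<integral>x. \<bar>(A ^^ j) g x\<bar> \<partial>lborel)"
        using iPhv iPg by (simp add: Bochner_Integration.integral_add Bochner_Integration.integrable_sum Bochner_Integration.integral_sum)
      finally show ?thesis .
    qed
    have inV: "in_V (\<lambda>x. f2 x - f1 x)"
      unfolding in_V_def using si1 si2 s1 s2 unfolding stationary_def by auto
    have n2: "(\<integral>x. \<bar>(A ^^ i) hv x\<bar> \<partial>lborel) \<le> c * (\<integral>x. \<bar>hv x\<bar> \<partial>lborel)"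
    proof -
      have "hr ((transfer \<rho>1 T ^^ i) (\<lambda>x. f2 x - f1 x)) = (A ^^ i) hv"
        unfolding A_def hv_def by (rule transfer_pow) (rule tr1)
      then show ?thesis using contr[OF inV] unfolding L1norm_hr hv_def by simp
    qed
    have n3: "(\<integral>x. \<bar>(A ^^ j) g x\<bar> \<partial>lborel) \<le> M ^ j * (\<integral>x. \<bar>g x\<bar> \<partial>lborel)" for j
      unfolding A_def M_def by (rule Qpow_L1[OF k1 TrOK fS ig])
    have n4: "(\<integral>x. \<bar>g x\<bar> \<partial>lborel) \<le> 2 * (\<integral>z. \<bar>\<rho>2 z - \<rho>1 z\<bar> \<partial>lborel) * (\<integral>x. \<bar>F2 x\<bar> \<partial>lborel)"
      unfolding g_def by (rule Q_L1[OF kern_diff[OF k2 k1] TrOK iF2 fS])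
    have n5: "(\<integral>x. \<bar>F2 x\<bar> \<partial>lborel) = 1"
    proof -
      have "(\<integral>x. \<bar>F2 x\<bar> \<partial>lborel) = (\<integral>x. F2 x \<partial>lborel)"
      proof (rule integral_cong_AE)
        show "(\<lambda>x. \<bar>F2 x\<bar>) \<in> borel_measurable lborel" using iF2 by auto
        show "F2 \<in> borel_measurable lborel" using iF2 by auto
        have "AE x in lborel. x \<in> {0..1} \<longrightarrow> f2 x \<ge> 0" using s2 unfolding stationary_def by blast
        then show "AE x in lborel. \<bar>F2 x\<bar> = F2 x"
          by eventually_elim (auto simp: F2_def hr_def split: split_indicator)
      qed
      also have "\<dots> = (LINT x:{0..1}|lborel. f2 x)"
        unfolding F2_def hr_def set_lebesgue_integral_def by simp
      also have "\<dots> = 1" using s2 unfolding stationary_def by blast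
      finally show ?thesis .
    qed
    have n6: "(\<integral>z. \<bar>\<rho>2 z - \<rho>1 z\<bar> \<partial>lborel) = (\<integral>z. \<bar>\<rho>1 z - \<rho>2 z\<bar> \<partial>lborel)"
      by (simp add: abs_minus_commute)
    define D where "D = (\<integral>z. \<bar>\<rho>1 z - \<rho>2 z\<bar> \<partial>lborel)"
    have D0: "0 \<le> D" unfolding D_def by simp
    have gD: "(\<integral>x. \<bar>g x\<bar> \<partial>lborel) \<le> 2 * D" using n4 n5 n6 unfolding D_def by simp
    have "(\<Sum>j<i. \<integral>x. \<bar>(A ^^ j) g x\<bar> \<partial>lborel) \<le> (\<Sum>j<i. M ^ j * (2 * D))"
      by (intro sum_mono order_trans[OF n3] mult_left_mono gD) (use M0 in auto)
    also have "\<dots> = 2 * K * D" unfolding K_def by (simp add: sum_distrib_right sum_distrib_left mult_ac)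
    finally have n7: "(\<Sum>j<i. \<integral>x. \<bar>(A ^^ j) g x\<bar> \<partial>lborel) \<le> 2 * K * D" .
    define V where "V = (\<integral>x. \<bar>hv x\<bar> \<partial>lborel)"
    have "V \<le> c * V + 2 * K * D" using n1 n2 n7 unfolding V_def by linarith
    then have "(1 - c) * V \<le> 2 * K * D" by (simp add: algebra_simps)
    then have "V \<le> 2 * K * D / (1 - c)" using c1 by (simp add: field_simps)
    also have "\<dots> = (2 * K / (1 - c)) * D" by simp
    also have "\<dots> \<le> C * D" unfolding C_def using D0 by (intro mult_right_mono) auto
    finally have "V \<le> C * D" .
    then show "L1norm (\<lambda>x. f2 x - f1 x) \<le> C * (LINT x|lborel. \<bar>\<rho>1 x - \<rho>2 x\<bar>)"
      unfolding L1norm_hr V_def D_def hv_def .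
  qed
qed

end
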